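(* For every $n\ge0$, $$\{\varphi(R(\tau)):\tau\in Y_n\}=\{P\cup K(P): P\in\mathrm{NCP}_n\}.$$
   Context: Planar binary trees: $Y_0=\{|\}$, $Y_n=\{\sigma\vee\tau:\sigma\in Y_k,\tau\in Y_l,k+l=n-1\}$, $\sigma\vee\tau$ being the tree whose root has left subtree $\sigma$ and right subtree $\tau$; $Y=\bigcup_nY_n$. $R:Y\to Y$ is defined by $R(|)=|$, $R(\sigma\vee\tau)=(|\vee R(\sigma))\vee R(\tau)$. $\mathrm{NCP}_n$ is the set of noncrossing partitions of $[n]=\{1,\dots,n\}$ ($\mathrm{NCP}_0=\{\emptyset\}$), ordered by refinement ($P\le Q$ if every block of $P$ lies in a block of $Q$). For $P\in\mathrm{NCP}_m$, $Q\in\mathrm{NCP}_l$: $P*Q\in\mathrm{NCP}_{m+l}$ is the concatenation ($Q$ shifted by $m$); $P\,\underline*\,Q$ is obtained from $P*Q$ by merging the block of $P$ containing $m$ with the block containing $m+l$ (with $\emptyset*Q=Q$, $\emptyset\,\underline*\,Q=Q$, $P\,\underline*\,\emptyset=P$). $|$ denotes the unique partition of $[1]$. For partitions $P,Q$ of $[n]$, $P\cup Q$ is the partition of $[2n]$ whose blocks are $\{2i-1:i\in V\}$ for $V\in P$ and $\{2i:i\in W\}$ for $W\in Q$. The Kreweras complement $K(P)$ of $P\in\mathrm{NCP}_n$ is the largest $Q\in\mathrm{NCP}_n$ such that $P\cup Q$ is noncrossing. The bijection $\varphi:Y\to\mathrm{NCP}$ is defined by $\varphi(|)=\emptyset$ and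 $\varphi(\sigma\vee\tau)=\varphi(\sigma)*(|\,\underline*\,\varphi(\tau))$; equivalently, labelling the vertices of $\tau\in Y_n$ by $1,\dots,n$ in left-to-right order (vertices of left subtree, root, vertices of right subtree), the blocks of $\varphi(\tau)$ are the classes of the equivalence relation generated by "$x$ is the right child of $y$". *)

theory Defs
  imports Main
begin

text \<open>Planar binary trees: Leaf is the tree |, Node s t is s \<or> t.\<close>
datatype ptree = Leaf | Node ptree ptree

fun nodes :: "ptree \<Rightarrow> nat" where
  "nodes Leaf = 0"
| "nodes (Node s t) = Suc (nodes s + nodes t)"

definition Y :: "nat \<Rightarrow> ptree set" where
  "Y n = {t. nodes t = n}"

fun R :: "ptree \<Rightarrow> ptree" where
  "R Leaf = Leaf"
| "R (Node s t) = Node (Node Leaf (R s)) (R t)"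

definition is_partition :: "nat \<Rightarrow> nat set set \<Rightarrow> bool" where
  "is_partition n P \<longleftrightarrow> (\<forall>B\<in>P. B \<noteq> {}) \<and>
     (\<forall>B\<in>P. \<forall>C\<in>P. B \<noteq> C \<longrightarrow> B \<inter> C = {}) \<and> \<Union>P = {1..n}"

definition noncrossing :: "nat set set \<Rightarrow> bool" where
  "noncrossing P \<longleftrightarrow> \<not> (\<exists>B\<in>P. \<exists>C\<in>P. B \<noteq> C \<and>
     (\<exists>a b c d. a < b \<and> b < c \<and> c < d \<and> a \<in> B \<and> c \<in> B \<and> b \<in> C \<and> d \<in> C))"

definition NCP :: "nat \<Rightarrow> nat set set set" where
  "NCP n = {P. is_partition n P \<and> noncrossing P}"

definition refines :: "nat set set \<Rightarrow> nat set set \<Rightarrow> bool" where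
  "refines P Q \<longleftrightarrow> (\<forall>B\<in>P. \<exists>C\<in>Q. B \<subseteq> C)"

definition shift :: "nat \<Rightarrow> nat set set \<Rightarrow> nat set set" where
  "shift m Q = (\<lambda>B. (\<lambda>x. x + m) ` B) ` Q"

definition concat :: "nat \<Rightarrow> nat set set \<Rightarrow> nat set set \<Rightarrow> nat set set" where
  "concat m P Q = P \<union> shift m Q"

definition blk :: "nat set set \<Rightarrow> nat \<Rightarrow> nat set" where
  "blk S x = (THE B. B \<in> S \<and> x \<in> B)"

definition ustar :: "nat \<Rightarrow> nat set set \<Rightarrow> nat \<Rightarrow> nat set set \<Rightarrow> nat set set" where
  "ustar m P l Q =
     (if P = {} then Q else if Q = {} then P else
      (let S = concat m P Q; B1 = blk S m; B2 = blk S (m + l)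
       in (S - {B1, B2}) \<union> {B1 \<union> B2}))"

definition bar :: "nat set set" where
  "bar = {{1}}"

fun phi :: "ptree \<Rightarrow> nat set set" where
  "phi Leaf = {}"
| "phi (Node s t) = concat (nodes s) (phi s) (ustar 1 bar (nodes t) (phi t))"

text \<open>P \<union> Q: interleaving partition of [2n].\<close>
definition interleave :: "nat set set \<Rightarrow> nat set set \<Rightarrow> nat set set" where
  "interleave P Q = (\<lambda>V. (\<lambda>i. 2 * i - 1) ` V) ` P \<union> (\<lambda>W. (\<lambda>i. 2 * i) ` W) ` Q"

definition kreweras :: "nat \<Rightarrow> nat set set \<Rightarrow> nat set set" where
  "kreweras n P = (THE Q. Q \<in> NCP n \<and> noncrossing (interleave P Q) \<and>
      (\<forall>Q'\<in>NCP n. noncrossing (interleave P Q') \<longrightarrow> refines Q' Q))"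

end

theory Submission
  imports Defs
begin


definition eqv :: "nat \<Rightarrow> (nat \<Rightarrow> nat \<Rightarrow> bool) \<Rightarrow> bool" where
 "eqv n r \<longleftrightarrow> (\<forall>i j. r i j \<longrightarrow> 1 \<le> i \<and> i \<le> n \<and> 1 \<le> j \<and> j \<le> n) \<and> (\<forall>i. 1 \<le> i \<longrightarrow> i \<le> n \<longrightarrow> r i i)
   \<and> (\<forall>i j. r i j \<longrightarrow> r j i) \<and> (\<forall>i j k. r i j \<longrightarrow> r j k \<longrightarrow> r i k)"

definition ncr :: "(nat \<Rightarrow> nat \<Rightarrow> bool) \<Rightarrow> bool" where
 "ncr r \<longleftrightarrow> (\<forall>a b c d. a < b \<longrightarrow> b < c \<longrightarrow> c < d \<longrightarrow> r a c \<longrightarrow> r b d \<longrightarrow> r a b)"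

definition cat :: "nat \<Rightarrow> (nat\<Rightarrow>nat\<Rightarrow>bool) \<Rightarrow> (nat\<Rightarrow>nat\<Rightarrow>bool) \<Rightarrow> nat \<Rightarrow> nat \<Rightarrow> bool" where
 "cat m r1 r2 i j \<longleftrightarrow> (i \<le> m \<and> j \<le> m \<and> r1 i j) \<or> (m < i \<and> m < j \<and> r2 (i-m) (j-m))"

definition Uo :: "(nat\<Rightarrow>nat\<Rightarrow>bool) \<Rightarrow> nat \<Rightarrow> nat \<Rightarrow> nat \<Rightarrow> bool" where
 "Uo r l i j \<longleftrightarrow> (i = 1 \<and> j = 1) \<or> (2 \<le> i \<and> 2 \<le> j \<and> r (i-1) (j-1)) \<or> (i = 1 \<and> 2 \<le> j \<and> r (j-1) l) \<or> (j = 1 \<and> 2 \<le> i \<and> r (i-1) l)"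

definition emp :: "nat \<Rightarrow> nat \<Rightarrow> bool" where "emp i j = False"

fun rphi :: "ptree \<Rightarrow> nat \<Rightarrow> nat \<Rightarrow> bool" where
  "rphi Leaf = emp"
| "rphi (Node s t) = cat (nodes s) (rphi s) (Uo (rphi t) (nodes t))"

fun rP :: "ptree \<Rightarrow> nat \<Rightarrow> nat \<Rightarrow> bool" and rQ :: "ptree \<Rightarrow> nat \<Rightarrow> nat \<Rightarrow> bool" where
  "rP Leaf = emp"
| "rP (Node s t) = cat (Suc (nodes s)) (Uo (rQ s) (nodes s)) (rP t)"
| "rQ Leaf = emp"
| "rQ (Node s t) = cat (nodes s) (rP s) (Uo (rQ t) (nodes t))"

lemma eqv_emp: "eqv 0 emp" by (auto simp: eqv_def emp_def)

lemma eqvD: assumes "eqv n r"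
  shows "r i j \<Longrightarrow> 1 \<le> i" "r i j \<Longrightarrow> i \<le> n" "r i j \<Longrightarrow> 1 \<le> j" "r i j \<Longrightarrow> j \<le> n"
    "1 \<le> i \<Longrightarrow> i \<le> n \<Longrightarrow> r i i" "r i j \<Longrightarrow> r j i" "r i j \<Longrightarrow> r j k \<Longrightarrow> r i k"
  using assms unfolding eqv_def by blast+

lemma eqvI: assumes "\<And>i j. r i j \<Longrightarrow> 1 \<le> i \<and> i \<le> n \<and> 1 \<le> j \<and> j \<le> n"
  "\<And>i. 1 \<le> i \<Longrightarrow> i \<le> n \<Longrightarrow> r i i" "\<And>i j. r i j \<Longrightarrow> r j i" "\<And>i j k. r i j \<Longrightarrow> r j k \<Longrightarrow> r i k"
  shows "eqv n r" using assms unfolding eqv_def by blast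

lemma eqv_cat: assumes e1: "eqv m r1" and e2: "eqv l r2" shows "eqv (m+l) (cat m r1 r2)"
proof (rule eqvI)
  fix i j assume "cat m r1 r2 i j"
  then show "1 \<le> i \<and> i \<le> m + l \<and> 1 \<le> j \<and> j \<le> m + l"
    unfolding cat_def using eqvD(1-4)[OF e1, of i j] eqvD(1-4)[OF e2, of "i-m" "j-m"] by auto
next
  fix i assume i: "1 \<le> i" "i \<le> m + l"
  show "cat m r1 r2 i i"
  proof (cases "i \<le> m")
    case True then show ?thesis using eqvD(5)[OF e1, of i] i unfolding cat_def by auto
  next
    case False then have "1 \<le> i-m" "i-m \<le> l" using i by auto
    then show ?thesis using eqvD(5)[OF e2, of "i-m"] False unfolding cat_def by auto
  qed
next
  fix i j assume "cat m r1 r2 i j"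
  then show "cat m r1 r2 j i" unfolding cat_def using eqvD(6)[OF e1, of i j] eqvD(6)[OF e2, of "i-m" "j-m"] by auto
next
  fix i j k assume a: "cat m r1 r2 i j" "cat m r1 r2 j k"
  then show "cat m r1 r2 i k" unfolding cat_def using eqvD(7)[OF e1, of i j k] eqvD(7)[OF e2, of "i-m" "j-m" "k-m"] by auto
qed

lemma eqv_Uo: assumes e: "eqv l r" shows "eqv (Suc l) (Uo r l)"
proof (rule eqvI)
  fix i j assume "Uo r l i j"
  then show "1 \<le> i \<and> i \<le> Suc l \<and> 1 \<le> j \<and> j \<le> Suc l"
    unfolding Uo_def using eqvD(1-4)[OF e, of "i-1" "j-1"] eqvD(1-4)[OF e, of "i-1" l] eqvD(1-4)[OF e, of "j-1" l] by auto
next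
  fix i assume i: "1 \<le> i" "i \<le> Suc l"
  show "Uo r l i i"
  proof (cases "i = 1")
    case True then show ?thesis unfolding Uo_def by auto
  next
    case False then have "1 \<le> i-1" "i-1 \<le> l" using i by auto
    then show ?thesis using eqvD(5)[OF e, of "i-1"] False i unfolding Uo_def by auto
  qed
next
  fix i j assume "Uo r l i j"
  note sy = eqvD(6)[OF e]
  from \<open>Uo r l i j\<close> show "Uo r l j i" unfolding Uo_def by (elim disjE conjE) (auto intro: sy)
next
  fix i j k assume a: "Uo r l i j" "Uo r l j k"
  note tr = eqvD(7)[OF e] and sy = eqvD(6)[OF e]
  consider "i = 1" "j = 1" | "i = 1" "2 \<le> j" "r (j-1) l" | "j = 1" "2 \<le> i" "r (i-1) l" | "2 \<le> i" "2 \<le> j" "r (i-1) (j-1)"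
    using a(1) unfolding Uo_def by auto
  then show "Uo r l i k"
  proof cases
    case 1 then show ?thesis using a(2) by simp
  next
    case 2
    note o = 2
    from a(2) consider "k = 1" | "2 \<le> k" "r (j-1) (k-1)" using 2 unfolding Uo_def by auto
    then show ?thesis proof cases
      case 1 then show ?thesis using o unfolding Uo_def by simp
    next
      case 2
      have "r (k-1) l" using tr[OF sy[OF 2(2)] o(3)] .
      then show ?thesis using 2 o unfolding Uo_def by simp
    qed
  next
    case 3
    from a(2) consider "k = 1" | "2 \<le> k" "r (k-1) l" using 3 unfolding Uo_def by auto
    then show ?thesis proof cases
      case 1 then show ?thesis using 3 unfolding Uo_def by simp
    next
      case 2
      have "r (i-1) (k-1)" using tr[OF 3(3) sy[OF 2(2)]] .
      then show ?thesis using 2 3 unfolding Uo_def by simp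
    qed
  next
    case 4
    from a(2) consider "k = 1" "r (j-1) l" | "2 \<le> k" "r (j-1) (k-1)" using 4 unfolding Uo_def by auto
    then show ?thesis proof cases
      case 1
      have "r (i-1) l" using tr[OF 4(3) 1(2)] .
      then show ?thesis using 1 4 unfolding Uo_def by simp
    next
      case 2
      have "r (i-1) (k-1)" using tr[OF 4(3) 2(2)] .
      then show ?thesis using 2 4 unfolding Uo_def by simp
    qed
  qed
qed

lemma ncr_emp: "ncr emp" by (auto simp: ncr_def emp_def)

lemma ncr_cat: assumes "eqv m r1" "ncr r1" "ncr r2" shows "ncr (cat m r1 r2)"
  unfolding ncr_def
proof (intro allI impI)
  fix a b c d :: nat
  assume o: "a < b" "b < c" "c < d" and ac: "cat m r1 r2 a c" and bd: "cat m r1 r2 b d"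
  show "cat m r1 r2 a b"
  proof (cases "c \<le> m")
    case True
    then have "r1 a c" "r1 b d" using ac bd o unfolding cat_def by auto
    then show ?thesis using assms(2) o True unfolding ncr_def cat_def by auto
  next
    case False
    then have "m < a" using ac unfolding cat_def by auto
    then have "r2 (a-m) (c-m)" "r2 (b-m) (d-m)" using ac bd o unfolding cat_def by auto
    moreover have "a - m < b - m" "b-m < c-m" "c-m < d-m" using o \<open>m<a\<close> by auto
    ultimately have "r2 (a-m) (b-m)" using assms(3) unfolding ncr_def by blast
    then show ?thesis using o \<open>m<a\<close> unfolding cat_def by auto
  qed
qed

lemma ncr_Uo: assumes "eqv l r" "ncr r" shows "ncr (Uo r l)"
  unfolding ncr_def
proof (intro allI impI)
  fix a b c d :: nat
  assume o: "a < b" "b < c" "c < d" and ac: "Uo r l a c" and bd: "Uo r l b d"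
  have "1 \<le> a" using ac unfolding Uo_def by auto
  have bd': "r (b-1) (d-1)" using bd o \<open>1 \<le> a\<close> unfolding Uo_def by auto
  show "Uo r l a b"
  proof (cases "a = 1")
    case True
    then have cl: "r (c-1) l" using ac o unfolding Uo_def by auto
    have "d - 1 \<le> l" using bd' assms(1) unfolding eqv_def by blast
    then have "r (b-1) l"
    proof (cases "d - 1 = l")
      case True then show ?thesis using bd' by simp
    next
      case False
      then have "b-1 < c-1" "c-1 < d-1" "d-1 < l" using o \<open>d - 1 \<le> l\<close> by auto
      then have "r (b-1) (c-1)" using assms(2) bd' cl unfolding ncr_def by blast
      then show ?thesis using cl assms(1) unfolding eqv_def by blast
    qed
    then show ?thesis using True o unfolding Uo_def by auto
  next
    case False
    then have "2 \<le> a" using ac unfolding Uo_def by auto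
    then have "r (a-1) (c-1)" using ac o unfolding Uo_def by auto
    moreover have "a-1 < b-1" "b-1 < c-1" "c-1<d-1" using o \<open>2 \<le> a\<close> by auto
    ultimately have "r (a-1) (b-1)" using bd' assms(2) unfolding ncr_def by blast
    then show ?thesis using o \<open>2 \<le> a\<close> unfolding Uo_def by auto
  qed
qed

lemma eqv_rphi: "eqv (nodes t) (rphi t) \<and> ncr (rphi t)"
proof (induction t)
  case Leaf then show ?case by (simp add: eqv_emp ncr_emp)
next
  case (Node s t)
  have "eqv (nodes s + Suc (nodes t)) (cat (nodes s) (rphi s) (Uo (rphi t) (nodes t)))"
    by (rule eqv_cat) (use Node in \<open>auto intro: eqv_Uo\<close>)
  moreover have "ncr (rphi (Node s t))" using Node by (simp add: ncr_cat ncr_Uo)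
  ultimately show ?case by simp
qed

lemma eqv_rPQ: "eqv (nodes t) (rP t) \<and> ncr (rP t) \<and> eqv (nodes t) (rQ t) \<and> ncr (rQ t)"
proof (induction t)
  case Leaf then show ?case by (simp add: eqv_emp ncr_emp)
next
  case (Node s t)
  have "eqv (Suc (nodes s) + nodes t) (cat (Suc (nodes s)) (Uo (rQ s) (nodes s)) (rP t))"
    by (rule eqv_cat) (use Node in \<open>auto intro: eqv_Uo\<close>)
  moreover have "eqv (nodes s + Suc (nodes t)) (cat (nodes s) (rP s) (Uo (rQ t) (nodes t)))"
    by (rule eqv_cat) (use Node in \<open>auto intro: eqv_Uo\<close>)
  ultimately have "eqv (nodes (Node s t)) (rP (Node s t))" "eqv (nodes (Node s t)) (rQ (Node s t))" by simp_all
  moreover have "ncr (rP (Node s t))" using Node by (simp add: ncr_cat ncr_Uo eqv_Uo)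
  moreover have "ncr (rQ (Node s t))" using Node by (simp add: ncr_cat ncr_Uo eqv_Uo)
  ultimately show ?case by blast
qed



lemma cat_LL: "i \<le> m \<Longrightarrow> j \<le> m \<Longrightarrow> cat m r1 r2 i j = r1 i j" by (auto simp: cat_def)
lemma cat_RR: "m < i \<Longrightarrow> m < j \<Longrightarrow> cat m r1 r2 i j = r2 (i-m) (j-m)" by (auto simp: cat_def)
lemma cat_LR: "i \<le> m \<Longrightarrow> m < j \<Longrightarrow> \<not> cat m r1 r2 i j" by (auto simp: cat_def)
lemma cat_RL: "m < i \<Longrightarrow> j \<le> m \<Longrightarrow> \<not> cat m r1 r2 i j" by (auto simp: cat_def)
lemma Uo_11: "Uo r l 1 1" by (auto simp: Uo_def)
lemma Uo_1x: "2 \<le> j \<Longrightarrow> Uo r l 1 j = r (j-1) l" by (auto simp: Uo_def)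
lemma Uo_x1: "2 \<le> i \<Longrightarrow> Uo r l i 1 = r (i-1) l" by (auto simp: Uo_def)
lemma Uo_xx: "2 \<le> i \<Longrightarrow> 2 \<le> j \<Longrightarrow> Uo r l i j = r (i-1) (j-1)" by (auto simp: Uo_def)

definition closed :: "(nat \<Rightarrow> nat \<Rightarrow> bool) \<Rightarrow> nat \<Rightarrow> nat \<Rightarrow> bool" where
  "closed r u v \<longleftrightarrow> (\<forall>x y. r x y \<longrightarrow> u \<le> x \<longrightarrow> x \<le> v \<longrightarrow> u \<le> y \<and> y \<le> v)"

lemma closedI: "(\<And>x y. r x y \<Longrightarrow> u \<le> x \<Longrightarrow> x \<le> v \<Longrightarrow> u \<le> y \<and> y \<le> v) \<Longrightarrow> closed r u v"
  unfolding closed_def by blast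
lemma closedD: "closed r u v \<Longrightarrow> r x y \<Longrightarrow> u \<le> x \<Longrightarrow> x \<le> v \<Longrightarrow> u \<le> y \<and> y \<le> v"
  unfolding closed_def by blast

lemma rP_Node: "rP (Node s t) = cat (Suc (nodes s)) (Uo (rQ s) (nodes s)) (rP t)" by simp
lemma rQ_Node: "rQ (Node s t) = cat (nodes s) (rP s) (Uo (rQ t) (nodes t))" by simp
declare rP.simps(2)[simp del] rQ.simps(2)[simp del]

lemma M: "(\<forall>j k. 1 \<le> j \<longrightarrow> j \<le> k \<longrightarrow> k \<le> nodes t \<longrightarrow> closed (rQ t) j (k-1) \<longrightarrow> rP t j k) \<and>
          (\<forall>j k. 1 \<le> j \<longrightarrow> j \<le> k \<longrightarrow> k \<le> nodes t \<longrightarrow> closed (rP t) (Suc j) k \<longrightarrow> rQ t j k)"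
proof (induction t)
  case Leaf then show ?case by simp
next
  case (Node s t)
  define a where "a = nodes s"
  define b where "b = nodes t"
  have n: "nodes (Node s t) = Suc (a + b)" by (simp add: a_def b_def)
  have es: "eqv a (rP s)" "eqv a (rQ s)" using eqv_rPQ a_def by auto
  have et: "eqv b (rP t)" "eqv b (rQ t)" using eqv_rPQ b_def by auto
  have eP: "eqv (Suc (a+b)) (rP (Node s t))" and eQ: "eqv (Suc (a+b)) (rQ (Node s t))"
    using eqv_rPQ[of "Node s t"] n by auto
  have P: "rP (Node s t) = cat (Suc a) (Uo (rQ s) a) (rP t)" by (simp add: rP_Node a_def)
  have Q: "rQ (Node s t) = cat a (rP s) (Uo (rQ t) b)" by (simp add: rQ_Node a_def b_def)
  have IH1s: "\<And>j k. 1 \<le> j \<Longrightarrow> j \<le> k \<Longrightarrow> k \<le> a \<Longrightarrow> closed (rQ s) j (k-1) \<Longrightarrow> rP s j k"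
   and IH2s: "\<And>j k. 1 \<le> j \<Longrightarrow> j \<le> k \<Longrightarrow> k \<le> a \<Longrightarrow> closed (rP s) (Suc j) k \<Longrightarrow> rQ s j k"
    using Node.IH(1) a_def by blast+
  have IH1t: "\<And>j k. 1 \<le> j \<Longrightarrow> j \<le> k \<Longrightarrow> k \<le> b \<Longrightarrow> closed (rQ t) j (k-1) \<Longrightarrow> rP t j k"
   and IH2t: "\<And>j k. 1 \<le> j \<Longrightarrow> j \<le> k \<Longrightarrow> k \<le> b \<Longrightarrow> closed (rP t) (Suc j) k \<Longrightarrow> rQ t j k"
    using Node.IH(2) b_def by blast+
  have part1: "rP (Node s t) j k" if j: "1 \<le> j" "j \<le> k" "k \<le> Suc (a+b)" and cl: "closed (rQ (Node s t)) j (k-1)" for j k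
  proof -
    consider "k \<le> Suc a" | "Suc a < j" | "j \<le> Suc a" "Suc a < k" by linarith
    then show ?thesis
    proof cases
      case 1
      then have "rP (Node s t) j k = Uo (rQ s) a j k" using P j by (simp add: cat_LL)
      moreover have "Uo (rQ s) a j k"
      proof (cases "j = 1")
        case True
        show ?thesis
        proof (cases "k = 1")
          case True then show ?thesis using \<open>j = 1\<close> by (simp add: Uo_def)
        next
          case False
          have "closed (rP s) (Suc (k-1)) a"
          proof (rule closedI)
            fix x y assume xy: "rP s x y" "Suc (k-1) \<le> x" "x \<le> a"
            have y: "1 \<le> y" "y \<le> a" using eqvD(3,4)[OF es(1) xy(1)] by auto
            show "Suc (k-1) \<le> y \<and> y \<le> a"
            proof (rule ccontr)
              assume "\<not> ?thesis"
              then have "y \<le> k - 1" using y by auto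
              have "rQ (Node s t) y x" using Q eqvD(6)[OF es(1) xy(1)] y xy by (simp add: cat_LL)
              then have "x \<le> k - 1" using closedD[OF cl] \<open>y \<le> k-1\<close> y True by auto
              then show False using xy False by auto
            qed
          qed
          then have "rQ s (k-1) a" using IH2s[of "k-1" a] 1 False j by auto
          then show ?thesis using True False j by (simp add: Uo_def)
        qed
      next
        case False
        have "closed (rP s) (Suc (j-1)) (k-1)"
        proof (rule closedI)
          fix x y assume xy: "rP s x y" "Suc (j-1) \<le> x" "x \<le> k-1"
          have "rQ (Node s t) x y" using Q xy(1) eqvD(2,4)[OF es(1) xy(1)] by (simp add: cat_LL)
          then show "Suc (j-1) \<le> y \<and> y \<le> k-1" using closedD[OF cl] xy False j by auto
        qed
        then have "rQ s (j-1) (k-1)" using IH2s[of "j-1" "k-1"] 1 False j by auto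
        then show ?thesis using False j by (simp add: Uo_xx)
      qed
      ultimately show ?thesis by simp
    next
      case 2
      then have e: "rP (Node s t) j k = rP t (j - Suc a) (k - Suc a)" using P j by (simp add: cat_RR)
      have "closed (rQ t) (j - Suc a) (k - Suc a - 1)"
      proof (rule closedI)
        fix x y assume xy: "rQ t x y" "j - Suc a \<le> x" "x \<le> k - Suc a - 1"
        have xy1: "1 \<le> x" "1 \<le> y" "y \<le> b" using eqvD(1,3,4)[OF et(2) xy(1)] by auto
        have "rQ (Node s t) (x + Suc a) (y + Suc a)" using Q xy(1) xy1 by (simp add: cat_RR Uo_xx)
        then have "j \<le> y + Suc a \<and> y + Suc a \<le> k - 1" using closedD[OF cl] xy 2 by auto
        then show "j - Suc a \<le> y \<and> y \<le> k - Suc a - 1" by auto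
      qed
      then show ?thesis using e IH1t[of "j - Suc a" "k - Suc a"] 2 j by auto
    next
      case 3
      have b1: "1 \<le> b" using 3 j by auto
      have "rQ (Node s t) (Suc a) (Suc (a+b))" using Q b1 eqvD(5)[OF et(2), of b]
        by (simp add: cat_RR Uo_def)
      then show ?thesis using closedD[OF cl] 3 j by fastforce
    qed
  qed
  have part2: "rQ (Node s t) j k" if j: "1 \<le> j" "j \<le> k" "k \<le> Suc (a+b)" and cl: "closed (rP (Node s t)) (Suc j) k" for j k
  proof -
    consider "k \<le> a" | "a < j" | "j \<le> a" "a < k" by linarith
    then show ?thesis
    proof cases
      case 1
      have "closed (rQ s) j (k-1)"
      proof (rule closedI)
        fix x y assume xy: "rQ s x y" "j \<le> x" "x \<le> k-1"
        have xy1: "1 \<le> x" "1 \<le> y" "y \<le> a" "x \<le> a" using eqvD(1-4)[OF es(2) xy(1)] by auto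
        have "rP (Node s t) (Suc x) (Suc y)" using P xy(1) xy1 by (simp add: cat_LL Uo_xx)
        moreover have "Suc j \<le> Suc x" "Suc x \<le> k" using xy 1 j by auto
        ultimately have "Suc j \<le> Suc y \<and> Suc y \<le> k" using closedD[OF cl] by blast
        then show "j \<le> y \<and> y \<le> k-1" by auto
      qed
      then have "rP s j k" using IH1s[of j k] 1 j by auto
      then show ?thesis using Q 1 j by (simp add: cat_LL)
    next
      case 2
      have e: "rQ (Node s t) j k = Uo (rQ t) b (j - a) (k - a)" using Q 2 j by (simp add: cat_RR)
      show ?thesis
      proof (cases "j = Suc a")
        case True
        show ?thesis
        proof (cases "k = Suc a")
          case True then show ?thesis using e \<open>j = Suc a\<close> by (simp add: Uo_def)
        next
          case False
          have "closed (rP t) (Suc (k - Suc a)) b"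
          proof (rule closedI)
            fix x y assume xy: "rP t x y" "Suc (k - Suc a) \<le> x" "x \<le> b"
            have y: "1 \<le> y" "y \<le> b" using eqvD(3,4)[OF et(1) xy(1)] by auto
            show "Suc (k - Suc a) \<le> y \<and> y \<le> b"
            proof (rule ccontr)
              assume "\<not> ?thesis"
              then have "y \<le> k - Suc a" using y by auto
              have "rP (Node s t) (y + Suc a) (x + Suc a)" using P eqvD(6)[OF et(1) xy(1)] y xy by (simp add: cat_RR)
              then have "x + Suc a \<le> k" using closedD[OF cl] \<open>y \<le> k - Suc a\<close> y True by auto
              then show False using xy False by auto
            qed
          qed
          then have "rQ t (k - Suc a) b" using IH2t[of "k - Suc a" b] 2 False j True by auto
          moreover have "k - a - 1 = k - Suc a" by simp
          ultimately show ?thesis using e True False j using Uo_def by force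
        qed
      next
        case False
        have "closed (rP t) (Suc (j - Suc a)) (k - Suc a)"
        proof (rule closedI)
          fix x y assume xy: "rP t x y" "Suc (j - Suc a) \<le> x" "x \<le> k - Suc a"
          have xy1: "1 \<le> x" "1 \<le> y" "y \<le> b" using eqvD(1,3,4)[OF et(1) xy(1)] by auto
          have "rP (Node s t) (x + Suc a) (y + Suc a)" using P xy(1) xy1 by (simp add: cat_RR)
          moreover have "Suc j \<le> x + Suc a" "x + Suc a \<le> k" using xy 2 False by auto
          ultimately have "Suc j \<le> y + Suc a \<and> y + Suc a \<le> k" using closedD[OF cl] by blast
          then show "Suc (j - Suc a) \<le> y \<and> y \<le> k - Suc a" using 2 by auto
        qed
        then have "rQ t (j - Suc a) (k - Suc a)" using IH2t[of "j - Suc a" "k - Suc a"] 2 False j by auto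
        moreover have "j - a - 1 = j - Suc a" "k - a - 1 = k - Suc a" by simp_all
        ultimately show ?thesis using e 2 False j by (simp add: Uo_xx)
      qed
    next
      case 3
      have "rP (Node s t) (Suc a) 1"
      proof (cases "a = 0")
        case True then show ?thesis using P by (simp add: cat_LL Uo_def)
      next
        case False then show ?thesis using P eqvD(5)[OF es(2), of a] by (simp add: cat_LL Uo_def)
      qed
      then show ?thesis using closedD[OF cl] 3 j by fastforce
    qed
  qed
  show ?case using part1 part2 n by auto
qed



definition part :: "(nat \<Rightarrow> nat \<Rightarrow> bool) \<Rightarrow> nat set set" where
  "part r = (\<lambda>i. {j. r i j}) ` {i. r i i}"

lemma eqv_sym: "eqv n r \<Longrightarrow> r i j \<Longrightarrow> r j i" by (rule eqvD(6))
lemma eqv_trans: "eqv n r \<Longrightarrow> r i j \<Longrightarrow> r j k \<Longrightarrow> r i k" by (rule eqvD(7))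
lemma eqv_reflL: "eqv n r \<Longrightarrow> r i j \<Longrightarrow> r i i" by (metis eqvD(6,7))
lemma eqv_reflR: "eqv n r \<Longrightarrow> r i j \<Longrightarrow> r j j" by (metis eqvD(6,7))

lemma block_eq: assumes e: "eqv n r" and "r i k" shows "{j. r i j} = {j. r k j}"
proof -
  have "r k j" if "r i j" for j using eqv_trans[OF e eqv_sym[OF e \<open>r i k\<close>] that] .
  moreover have "r i j" if "r k j" for j using eqv_trans[OF e \<open>r i k\<close> that] .
  ultimately show ?thesis by blast
qed

lemma part_mem: "B \<in> part r \<longleftrightarrow> (\<exists>i. r i i \<and> B = {j. r i j})"
  unfolding part_def by auto

lemma is_partition_part: assumes e: "eqv n r" shows "is_partition n (part r)"
  unfolding is_partition_def
proof (intro conjI)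
  show "\<forall>B\<in>part r. B \<noteq> {}" unfolding part_def by auto
  show "\<forall>B\<in>part r. \<forall>C\<in>part r. B \<noteq> C \<longrightarrow> B \<inter> C = {}"
  proof (intro ballI impI)
    fix B C assume "B \<in> part r" "C \<in> part r" "B \<noteq> C"
    then obtain i k where ik: "B = {j. r i j}" "C = {j. r k j}" unfolding part_def by auto
    show "B \<inter> C = {}"
    proof (rule ccontr)
      assume "B \<inter> C \<noteq> {}"
      then obtain x where "r i x" "r k x" using ik by auto
      then have "r i k" using eqv_trans[OF e _ eqv_sym[OF e]] by blast
      then show False using block_eq[OF e] ik \<open>B \<noteq> C\<close> by blast
    qed
  qed
  show "\<Union> (part r) = {1..n}"
  proof
    show "\<Union> (part r) \<subseteq> {1..n}" unfolding part_def using eqvD(3,4)[OF e] by auto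
    show "{1..n} \<subseteq> \<Union> (part r)"
    proof
      fix x assume "x \<in> {1..n}"
      then have "r x x" using eqvD(5)[OF e] by auto
      then show "x \<in> \<Union> (part r)" unfolding part_def by auto
    qed
  qed
qed

lemma noncrossing_part: assumes e: "eqv n r" shows "noncrossing (part r) \<longleftrightarrow> ncr r"
proof
  assume nc: "noncrossing (part r)"
  show "ncr r" unfolding ncr_def
  proof (intro allI impI)
    fix a b c d :: nat assume o: "a < b" "b < c" "c < d" "r a c" "r b d"
    show "r a b"
    proof (rule ccontr)
      assume nab: "\<not> r a b"
      have aa: "r a a" and bb: "r b b" using eqv_reflL[OF e] o by blast+
      have X: "{j. r a j} \<in> part r" and Y: "{j. r b j} \<in> part r" using aa bb unfolding part_def by auto
      have ne: "{j. r a j} \<noteq> {j. r b j}" using bb nab by blast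
      have W: "\<exists>a' b' c' d'. a' < b' \<and> b' < c' \<and> c' < d' \<and> a' \<in> {j. r a j} \<and> c' \<in> {j. r a j} \<and> b' \<in> {j. r b j} \<and> d' \<in> {j. r b j}"
        using o aa bb by auto
      have "\<exists>B\<in>part r. \<exists>C\<in>part r. B \<noteq> C \<and> (\<exists>a b c d. a < b \<and> b < c \<and> c < d \<and> a \<in> B \<and> c \<in> B \<and> b \<in> C \<and> d \<in> C)"
        by (rule bexI[OF _ X], rule bexI[OF _ Y]) (use ne W in simp)
      then show False using nc unfolding noncrossing_def by simp
    qed
  qed
next
  assume nc: "ncr r"
  show "noncrossing (part r)" unfolding noncrossing_def
  proof
    assume "\<exists>B\<in>part r. \<exists>C\<in>part r. B \<noteq> C \<and> (\<exists>a b c d. a < b \<and> b < c \<and> c < d \<and> a \<in> B \<and> c \<in> B \<and> b \<in> C \<and> d \<in> C)"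
    then obtain B C where B: "B \<in> part r" and C: "C \<in> part r" and BC0: "B \<noteq> C"
      and ex: "\<exists>a b c d. a < b \<and> b < c \<and> c < d \<and> a \<in> B \<and> c \<in> B \<and> b \<in> C \<and> d \<in> C" by blast
    obtain i where i: "B = {j. r i j}" using B unfolding part_mem by blast
    obtain k where k: "C = {j. r k j}" using C unfolding part_mem by blast
    obtain a b c d where BC: "{j. r i j} \<noteq> {j. r k j}" "a < b" "b < c" "c < d"
      "r i a" "r i c" "r k b" "r k d" using ex BC0 unfolding i k by auto
    have "r a c" using eqv_trans[OF e eqv_sym[OF e BC(5)] BC(6)] .
    moreover have "r b d" using eqv_trans[OF e eqv_sym[OF e BC(7)] BC(8)] .
    ultimately have "r a b" using nc BC unfolding ncr_def by blast
    then have "r i b" using eqv_trans[OF e BC(5)] by blast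
    then have "r i k" using eqv_trans[OF e _ eqv_sym[OF e BC(7)]] by blast
    then show False using BC(1) block_eq[OF e] by blast
  qed
qed

lemma part_NCP: "eqv n r \<Longrightarrow> ncr r \<Longrightarrow> part r \<in> NCP n"
  unfolding NCP_def using is_partition_part noncrossing_part by blast

definition sb :: "nat set set \<Rightarrow> nat \<Rightarrow> nat \<Rightarrow> bool" where
  "sb P i j \<longleftrightarrow> (\<exists>B\<in>P. i \<in> B \<and> j \<in> B)"

lemma partition_sb: assumes "is_partition n P"
  shows "eqv n (sb P)" "P = part (sb P)"
proof -
  have ne: "\<And>B. B \<in> P \<Longrightarrow> B \<noteq> {}" and dj: "\<And>B C. B \<in> P \<Longrightarrow> C \<in> P \<Longrightarrow> B \<noteq> C \<Longrightarrow> B \<inter> C = {}"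
    and un: "\<Union>P = {1..n}" using assms unfolding is_partition_def by blast+
  show "eqv n (sb P)"
  proof (rule eqvI)
    fix i j assume "sb P i j" then show "1 \<le> i \<and> i \<le> n \<and> 1 \<le> j \<and> j \<le> n" using un unfolding sb_def by auto
  next
    fix i assume "1 \<le> i" "i \<le> n" then have "i \<in> \<Union>P" using un by auto
    then show "sb P i i" unfolding sb_def by auto
  next
    fix i j assume "sb P i j" then show "sb P j i" unfolding sb_def by auto
  next
    fix i j k assume "sb P i j" "sb P j k" then show "sb P i k" unfolding sb_def using dj by blast
  qed
  show "P = part (sb P)"
  proof
    show "P \<subseteq> part (sb P)"
    proof
      fix B assume B: "B \<in> P"
      then obtain i where i: "i \<in> B" using ne by blast
      have "B = {j. sb P i j}" unfolding sb_def using B i dj by blast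
      moreover have "sb P i i" unfolding sb_def using B i by blast
      ultimately show "B \<in> part (sb P)" unfolding part_def by blast
    qed
    show "part (sb P) \<subseteq> P"
    proof
      fix B assume "B \<in> part (sb P)"
      then obtain i where i: "sb P i i" "B = {j. sb P i j}" unfolding part_def by blast
      then obtain C where C: "C \<in> P" "i \<in> C" unfolding sb_def by blast
      have "B = C" unfolding i(2) sb_def using C dj by blast
      then show "B \<in> P" using C by simp
    qed
  qed
qed

lemma NCP_sb: assumes "P \<in> NCP n" shows "eqv n (sb P)" "P = part (sb P)" "ncr (sb P)"
proof -
  have ip: "is_partition n P" and nc: "noncrossing P" using assms unfolding NCP_def by auto
  show e: "eqv n (sb P)" and pe: "P = part (sb P)" using partition_sb[OF ip] by auto
  show "ncr (sb P)" using noncrossing_part[OF e] nc pe by simp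
qed

lemma refines_part: assumes e1: "eqv n r1" and e2: "eqv n r2"
  shows "refines (part r1) (part r2) \<longleftrightarrow> (\<forall>i j. r1 i j \<longrightarrow> r2 i j)"
proof
  assume rf: "refines (part r1) (part r2)"
  show "\<forall>i j. r1 i j \<longrightarrow> r2 i j"
  proof (intro allI impI)
    fix i j assume ij: "r1 i j"
    have ii: "r1 i i" using eqv_reflL[OF e1 ij] .
    then obtain C where C: "C \<in> part r2" "{j. r1 i j} \<subseteq> C" using rf unfolding refines_def part_def by blast
    then obtain k where k: "C = {j. r2 k j}" unfolding part_def by blast
    have "r2 k i" "r2 k j" using C k ii ij by auto
    then show "r2 i j" using eqv_trans[OF e2 eqv_sym[OF e2]] by blast
  qed
next
  assume h: "\<forall>i j. r1 i j \<longrightarrow> r2 i j"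
  show "refines (part r1) (part r2)" unfolding refines_def
  proof
    fix B assume "B \<in> part r1"
    then obtain i where i: "r1 i i" "B = {j. r1 i j}" unfolding part_def by blast
    have "{j. r2 i j} \<in> part r2" using h i unfolding part_def by blast
    moreover have "B \<subseteq> {j. r2 i j}" using h i by blast
    ultimately show "\<exists>C\<in>part r2. B \<subseteq> C" by blast
  qed
qed

lemma part_inj: assumes "eqv n r1" "eqv n r2" "part r1 = part r2" shows "r1 = r2"
proof -
  have "\<forall>i j. r1 i j \<longrightarrow> r2 i j" "\<forall>i j. r2 i j \<longrightarrow> r1 i j"
    using refines_part[OF assms(1,2)] refines_part[OF assms(2,1)] assms(3)
    unfolding refines_def by blast+
  then show ?thesis by blast
qed



definition Il :: "(nat \<Rightarrow> nat \<Rightarrow> bool) \<Rightarrow> (nat \<Rightarrow> nat \<Rightarrow> bool) \<Rightarrow> nat \<Rightarrow> nat \<Rightarrow> bool" where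
  "Il r1 r2 i j \<longleftrightarrow> (odd i \<and> odd j \<and> r1 ((i+1) div 2) ((j+1) div 2)) \<or> (even i \<and> even j \<and> r2 (i div 2) (j div 2))"

lemma Il_oo: "Il r1 r2 (Suc (2*x)) (Suc (2*y)) = r1 (Suc x) (Suc y)"
  unfolding Il_def by simp
lemma Il_ee: "Il r1 r2 (2*x) (2*y) = r2 x y"
  unfolding Il_def by simp
lemma Il_oe: "\<not> Il r1 r2 (Suc (2*x)) (2*y)" unfolding Il_def by simp
lemma Il_eo: "\<not> Il r1 r2 (2*x) (Suc (2*y))" unfolding Il_def by simp

lemma nat_parity_cases: obtains x where "i = 2*x" | x where "i = Suc (2*x)"
  by (metis oddE evenE odd_Suc_div_two add.commute plus_1_eq_Suc)

lemma eqv_Il: assumes e1: "eqv n r1" and e2: "eqv n r2" shows "eqv (2*n) (Il r1 r2)"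
proof (rule eqvI)
  fix i j assume h: "Il r1 r2 i j"
  show "1 \<le> i \<and> i \<le> 2 * n \<and> 1 \<le> j \<and> j \<le> 2 * n"
  proof (cases "odd i")
    case True
    then have "r1 ((i+1) div 2) ((j+1) div 2)" "odd j" using h unfolding Il_def by auto
    then have "(i+1) div 2 \<le> n" "(j+1) div 2 \<le> n" "1 \<le> (i+1) div 2" using eqvD(1-4)[OF e1] by blast+
    then show ?thesis using True \<open>odd j\<close> by (auto elim!: oddE)
  next
    case False
    then have "r2 (i div 2) (j div 2)" "even j" using h unfolding Il_def by auto
    then have "i div 2 \<le> n" "j div 2 \<le> n" "1 \<le> i div 2" "1 \<le> j div 2" using eqvD(1-4)[OF e2] by blast+
    then show ?thesis using False \<open>even j\<close> by (auto elim!: evenE)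
  qed
next
  fix i assume i: "1 \<le> i" "i \<le> 2*n"
  show "Il r1 r2 i i"
  proof (cases i rule: nat_parity_cases)
    case (1 x) then show ?thesis using i eqvD(5)[OF e2, of x] by (simp add: Il_ee)
  next
    case (2 x) then show ?thesis using i eqvD(5)[OF e1, of "Suc x"] by (simp add: Il_oo)
  qed
next
  fix i j assume "Il r1 r2 i j" then show "Il r1 r2 j i" unfolding Il_def using eqvD(6)[OF e1] eqvD(6)[OF e2] by blast
next
  fix i j k assume "Il r1 r2 i j" "Il r1 r2 j k" then show "Il r1 r2 i k"
    unfolding Il_def using eqvD(7)[OF e1] eqvD(7)[OF e2] by blast
qed

lemma odd_block: assumes e: "eqv n r1" shows "{j. Il r1 r2 (Suc (2*x)) j} = (\<lambda>i. 2*i-1) ` {j. r1 (Suc x) j}"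
proof (rule set_eqI)
  fix j
  show "j \<in> {j. Il r1 r2 (Suc (2*x)) j} \<longleftrightarrow> j \<in> (\<lambda>i. 2*i-1) ` {j. r1 (Suc x) j}"
  proof
    assume "j \<in> {j. Il r1 r2 (Suc (2*x)) j}"
    then have h: "Il r1 r2 (Suc (2*x)) j" by simp
    obtain y where y: "j = Suc (2*y)" using h by (cases j rule: nat_parity_cases) (auto simp: Il_oe)
    then have "r1 (Suc x) (Suc y)" using h by (simp add: Il_oo)
    then show "j \<in> (\<lambda>i. 2*i-1) ` {j. r1 (Suc x) j}" using y by (auto intro!: image_eqI[of _ _ "Suc y"])
  next
    assume "j \<in> (\<lambda>i. 2*i-1) ` {j. r1 (Suc x) j}"
    then obtain y where y: "r1 (Suc x) y" "j = 2*y-1" by auto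
    then have "1 \<le> y" using eqvD(3)[OF e] by blast
    then obtain y' where "y = Suc y'" by (cases y) auto
    then show "j \<in> {j. Il r1 r2 (Suc (2*x)) j}" using y by (simp add: Il_oo)
  qed
qed

lemma even_block: "{j. Il r1 r2 (2*x) j} = (\<lambda>i. 2*i) ` {j. r2 x j}"
proof (rule set_eqI)
  fix j
  show "j \<in> {j. Il r1 r2 (2*x) j} \<longleftrightarrow> j \<in> (\<lambda>i. 2*i) ` {j. r2 x j}"
  proof
    assume "j \<in> {j. Il r1 r2 (2*x) j}"
    then have h: "Il r1 r2 (2*x) j" by simp
    obtain y where y: "j = 2*y" using h by (cases j rule: nat_parity_cases) (auto simp: Il_eo)
    then have "r2 x y" using h by (simp add: Il_ee)
    then show "j \<in> (\<lambda>i. 2*i) ` {j. r2 x j}" using y by auto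
  next
    assume "j \<in> (\<lambda>i. 2*i) ` {j. r2 x j}"
    then show "j \<in> {j. Il r1 r2 (2*x) j}" by (auto simp: Il_ee)
  qed
qed

lemma interleave_part: assumes e1: "eqv n r1" and e2: "eqv n r2"
  shows "interleave (part r1) (part r2) = part (Il r1 r2)"
proof
  show "interleave (part r1) (part r2) \<subseteq> part (Il r1 r2)"
  proof
    fix B assume "B \<in> interleave (part r1) (part r2)"
    then consider i where "r1 i i" "B = (\<lambda>i. 2*i-1) ` {j. r1 i j}" | i where "r2 i i" "B = (\<lambda>i. 2*i) ` {j. r2 i j}"
      unfolding interleave_def part_def by blast
    then show "B \<in> part (Il r1 r2)"
    proof cases
      case (1 i)
      then obtain x where x: "i = Suc x" using eqvD(1)[OF e1] by (cases i) auto
      have "B = {j. Il r1 r2 (Suc (2*x)) j}" using 1 x odd_block[OF e1] by simp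
      moreover have "Il r1 r2 (Suc (2*x)) (Suc (2*x))" using 1 x by (simp add: Il_oo)
      ultimately show ?thesis unfolding part_def by blast
    next
      case (2 i)
      have "B = {j. Il r1 r2 (2*i) j}" using 2 even_block by simp
      moreover have "Il r1 r2 (2*i) (2*i)" using 2 by (simp add: Il_ee)
      ultimately show ?thesis unfolding part_def by blast
    qed
  qed
  show "part (Il r1 r2) \<subseteq> interleave (part r1) (part r2)"
  proof
    fix B assume "B \<in> part (Il r1 r2)"
    then obtain i where i: "Il r1 r2 i i" "B = {j. Il r1 r2 i j}" unfolding part_def by blast
    show "B \<in> interleave (part r1) (part r2)"
    proof (cases i rule: nat_parity_cases)
      case (1 x)
      have "B = (\<lambda>i. 2*i) ` {j. r2 x j}" using i 1 even_block by simp
      moreover have "r2 x x" using i 1 by (simp add: Il_ee)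
      ultimately show ?thesis unfolding interleave_def part_def by blast
    next
      case (2 x)
      have "B = (\<lambda>i. 2*i-1) ` {j. r1 (Suc x) j}" using i 2 odd_block[OF e1] by simp
      moreover have "r1 (Suc x) (Suc x)" using i 2 by (simp add: Il_oo)
      ultimately show ?thesis unfolding interleave_def part_def by blast
    qed
  qed
qed



lemma Il_m1: "1 \<le> x \<Longrightarrow> 1 \<le> y \<Longrightarrow> Il r1 r2 (2*x - Suc 0) (2*y - Suc 0) = r1 x y"
  by (cases x; cases y) (simp_all add: Il_oo)
lemma Il_m1e: "1 \<le> x \<Longrightarrow> \<not> Il r1 r2 (2*x - Suc 0) (2*y)"
  by (cases x) (simp_all add: Il_oe)
lemma Il_em1: "1 \<le> y \<Longrightarrow> \<not> Il r1 r2 (2*x) (2*y - Suc 0)"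
  by (cases y) (simp_all add: Il_eo)

lemma key1: assumes eP: "eqv n P" and eQ: "eqv n Q"
  shows "Uo (Il P Q) (2*n) i j = Il (Uo Q n) P i j"
proof (cases i rule: nat_parity_cases)
  case (1 x)
  note i = 1
  show ?thesis
  proof (cases j rule: nat_parity_cases)
    case (1 y)
    have "Il (Uo Q n) P i j = P x y" using i 1 by (simp add: Il_ee)
    moreover have "Uo (Il P Q) (2*n) i j = P x y"
    proof (cases "x = 0 \<or> y = 0")
      case True
      then have "\<not> P x y" using eqvD(1,3)[OF eP, of x y] by auto
      moreover have "\<not> Uo (Il P Q) (2*n) i j" using True i 1 by (auto simp: Uo_def)
      ultimately show ?thesis by simp
    next
      case False
      then have "2 \<le> i" "2 \<le> j" using i 1 by auto
      then have "Uo (Il P Q) (2*n) i j = Il P Q (2*x-1) (2*y-1)" using i 1 by (simp add: Uo_def)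
      then show ?thesis using False by (simp add: Il_m1)
    qed
    ultimately show ?thesis by simp
  next
    case (2 y)
    have "\<not> Il (Uo Q n) P i j" using i 2 by (simp add: Il_eo)
    moreover have "\<not> Uo (Il P Q) (2*n) i j"
    proof (cases "x = 0")
      case True then show ?thesis using i by (simp add: Uo_def)
    next
      case False
      then have "2 \<le> i" using i by auto
      then show ?thesis using i 2 False by (auto simp: Uo_def Il_m1e Il_ee)
    qed
    ultimately show ?thesis by simp
  qed
next
  case (2 x)
  note i = 2
  show ?thesis
  proof (cases j rule: nat_parity_cases)
    case (1 y)
    have "\<not> Il (Uo Q n) P i j" using i 1 by (simp add: Il_oe)
    moreover have "\<not> Uo (Il P Q) (2*n) i j"
    proof (cases "y = 0")
      case True then show ?thesis using 1 by (simp add: Uo_def)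
    next
      case False
      then have "2 \<le> j" using 1 by auto
      then show ?thesis using i 1 False by (auto simp: Uo_def Il_em1 Il_m1e Il_eo)
    qed
    ultimately show ?thesis by simp
  next
    case (2 y)
    note j = 2
    have r: "Il (Uo Q n) P i j = Uo Q n (Suc x) (Suc y)" using i j by (simp add: Il_oo)
    show ?thesis
    proof (cases "x = 0")
      case x0: True
      show ?thesis
      proof (cases "y = 0")
        case True then show ?thesis using r i j x0 by (simp add: Uo_def)
      next
        case False
        have "Uo (Il P Q) (2*n) i j = Il P Q (2*y) (2*n)" using i j x0 False by (simp add: Uo_def)
        also have "\<dots> = Q y n" by (simp add: Il_ee)
        also have "\<dots> = Uo Q n (Suc x) (Suc y)" using x0 False by (simp add: Uo_def)
        finally show ?thesis using r by simp
      qed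
    next
      case x1: False
      show ?thesis
      proof (cases "y = 0")
        case True
        have "Uo (Il P Q) (2*n) i j = Il P Q (2*x) (2*n)" using i j x1 True by (simp add: Uo_def)
        also have "\<dots> = Q x n" by (simp add: Il_ee)
        also have "\<dots> = Uo Q n (Suc x) (Suc y)" using x1 True by (simp add: Uo_def)
        finally show ?thesis using r by simp
      next
        case False
        have "Uo (Il P Q) (2*n) i j = Il P Q (2*x) (2*y)" using i j x1 False by (simp add: Uo_def)
        also have "\<dots> = Q x y" by (simp add: Il_ee)
        also have "\<dots> = Uo Q n (Suc x) (Suc y)" using x1 False by (simp add: Uo_def)
        finally show ?thesis using r by simp
      qed
    qed
  qed
qed



lemma Il_par: "Il r1 r2 i j \<Longrightarrow> (odd i \<longleftrightarrow> odd j)" unfolding Il_def by auto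

lemma key2: assumes eA: "eqv (Suc a) A" and eP: "eqv a Ps" and eB: "eqv b B" and eT: "eqv c Pt"
  shows "Il (cat (Suc a) A Pt) (cat a Ps B) i j = cat (Suc (2*a)) (Il A Ps) (Il B Pt) i j"
proof (cases "odd i \<longleftrightarrow> odd j")
  case False
  have "\<not> Il (cat (Suc a) A Pt) (cat a Ps B) i j" using False Il_par by blast
  moreover have "\<not> cat (Suc (2*a)) (Il A Ps) (Il B Pt) i j"
  proof
    assume "cat (Suc (2*a)) (Il A Ps) (Il B Pt) i j"
    then consider "Il A Ps i j" | "Suc (2*a) < i" "Suc (2*a) < j" "Il B Pt (i - Suc (2*a)) (j - Suc (2*a))"
      unfolding cat_def by auto
    then show False
    proof cases
      case 1 then show ?thesis using False Il_par by blast
    next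
      case 2
      then have "odd (i - Suc (2*a)) \<longleftrightarrow> odd (j - Suc (2*a))" using Il_par by blast
      then show False using False 2 by presburger
    qed
  qed
  ultimately show ?thesis by simp
next
  case True
  show ?thesis
  proof (cases i rule: nat_parity_cases)
    case (1 x)
    then obtain y where j: "j = 2*y" using True by (cases j rule: nat_parity_cases) auto
    note i = 1
    have L: "Il (cat (Suc a) A Pt) (cat a Ps B) i j = cat a Ps B x y" using i j by (simp add: Il_ee)
    consider "x \<le> a" "y \<le> a" | "a < x" "a < y" | "x \<le> a" "a < y" | "a < x" "y \<le> a" by linarith
    then show ?thesis
    proof cases
      case 1
      then show ?thesis using L i j by (simp add: cat_LL Il_ee)
    next
      case 2
      have e1: "2*x - Suc (2*a) = Suc (2*(x - Suc a))" "2*y - Suc (2*a) = Suc (2*(y - Suc a))"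
        using 2 by arith+
      have e2: "Suc (x - Suc a) = x - a" "Suc (y - Suc a) = y - a" using 2 by arith+
      show ?thesis using L i j 2 by (simp add: cat_RR e1 Il_oo e2)
    next
      case 3 then show ?thesis using L i j by (simp add: cat_def)
    next
      case 4 then show ?thesis using L i j by (simp add: cat_def)
    qed
  next
    case (2 x)
    then obtain y where j: "j = Suc (2*y)" using True by (cases j rule: nat_parity_cases) auto
    note i = 2
    have L: "Il (cat (Suc a) A Pt) (cat a Ps B) i j = cat (Suc a) A Pt (Suc x) (Suc y)" using i j by (simp add: Il_oo)
    consider "x \<le> a" "y \<le> a" | "a < x" "a < y" | "x \<le> a" "a < y" | "a < x" "y \<le> a" by linarith
    then show ?thesis
    proof cases
      case 1
      then show ?thesis using L i j by (simp add: cat_LL Il_oo)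
    next
      case 2
      have e1: "Suc (2*x) - Suc (2*a) = 2*(x - a)" "Suc (2*y) - Suc (2*a) = 2*(y - a)"
         "2*x - 2*a = 2*(x - a)" "2*y - 2*a = 2*(y - a)"
        using 2 by arith+
      show ?thesis using L i j 2 by (simp add: cat_RR e1 Il_ee)
    next
      case 3 then show ?thesis using L i j by (simp add: cat_def)
    next
      case 4 then show ?thesis using L i j by (simp add: cat_def)
    qed
  qed
qed



lemma nodes_R: "nodes (R t) = 2 * nodes t" by (induction t) auto

lemma cat0_Uo: "cat 0 emp (Uo q l) = Uo q l"
  by (intro ext) (auto simp: cat_def Uo_def emp_def)

lemma Il_emp: "Il emp emp = emp" by (intro ext) (simp add: Il_def emp_def)

lemma rphi_R: "rphi (R t) = Il (rP t) (rQ t)"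
proof (induction t)
  case Leaf then show ?case by (simp add: Il_emp)
next
  case (Node s t)
  define a where "a = nodes s"
  define b where "b = nodes t"
  have es: "eqv a (rP s)" "eqv a (rQ s)" using eqv_rPQ a_def by auto
  have et: "eqv b (rP t)" "eqv b (rQ t)" using eqv_rPQ b_def by auto
  have "rphi (R (Node s t)) = cat (Suc (2*a)) (Uo (Il (rP s) (rQ s)) (2*a)) (Uo (Il (rP t) (rQ t)) (2*b))"
    using Node by (simp add: nodes_R a_def b_def cat0_Uo)
  also have "Uo (Il (rP s) (rQ s)) (2*a) = Il (Uo (rQ s) a) (rP s)"
    by (intro ext) (rule key1[OF es])
  also have "Uo (Il (rP t) (rQ t)) (2*b) = Il (Uo (rQ t) b) (rP t)"
    by (intro ext) (rule key1[OF et])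
  also have "cat (Suc (2*a)) (Il (Uo (rQ s) a) (rP s)) (Il (Uo (rQ t) b) (rP t)) = Il (cat (Suc a) (Uo (rQ s) a) (rP t)) (cat a (rP s) (Uo (rQ t) b))"
    by (intro ext) (rule key2[OF eqv_Uo[OF es(2)] es(1) eqv_Uo[OF et(2)] et(1), symmetric])
  also have "\<dots> = Il (rP (Node s t)) (rQ (Node s t))" by (simp add: rP_Node rQ_Node a_def b_def)
  finally show ?case .
qed

lemma part_emp: "part emp = {}" by (simp add: part_def emp_def)

lemma blockL: assumes "eqv m r1" "i \<le> m" shows "{j. cat m r1 r2 i j} = {j. r1 i j}"
  using assms eqvD(4)[OF assms(1)] by (auto simp: cat_def)

lemma blockR: assumes "eqv l r2" "1 \<le> i" shows "{j. cat m r1 r2 (i+m) j} = (\<lambda>x. x+m) ` {j. r2 i j}"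
proof (rule set_eqI)
  fix j show "j \<in> {j. cat m r1 r2 (i+m) j} \<longleftrightarrow> j \<in> (\<lambda>x. x+m) ` {j. r2 i j}"
  proof
    assume "j \<in> {j. cat m r1 r2 (i+m) j}"
    then have h: "cat m r1 r2 (i+m) j" by simp
    then have "m < j" "r2 i (j-m)" using assms(2) by (auto simp: cat_def)
    then show "j \<in> (\<lambda>x. x+m) ` {j. r2 i j}" by (auto intro!: image_eqI[of _ _ "j-m"])
  next
    assume "j \<in> (\<lambda>x. x+m) ` {j. r2 i j}"
    then obtain x where x: "r2 i x" "j = x + m" by auto
    then have "1 \<le> x" using eqvD(3)[OF assms(1)] by blast
    then show "j \<in> {j. cat m r1 r2 (i+m) j}" using x assms(2) by (simp add: cat_def)
  qed
qed

lemma concat_part: assumes e1: "eqv m r1" and e2: "eqv l r2"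
  shows "concat m (part r1) (part r2) = part (cat m r1 r2)"
proof
  show "concat m (part r1) (part r2) \<subseteq> part (cat m r1 r2)"
  proof
    fix B assume "B \<in> concat m (part r1) (part r2)"
    then consider i where "r1 i i" "B = {j. r1 i j}" | i where "r2 i i" "B = (\<lambda>x. x+m) ` {j. r2 i j}"
      unfolding concat_def shift_def part_def by blast
    then show "B \<in> part (cat m r1 r2)"
    proof cases
      case (1 i)
      have "i \<le> m" using eqvD(2)[OF e1 1(1)] .
      then have "B = {j. cat m r1 r2 i j}" "cat m r1 r2 i i" using 1 blockL[OF e1] by (auto simp: cat_def)
      then show ?thesis unfolding part_def by blast
    next
      case (2 i)
      have "1 \<le> i" using eqvD(1)[OF e2 2(1)] .
      then have "B = {j. cat m r1 r2 (i+m) j}" "cat m r1 r2 (i+m) (i+m)" using 2 blockR[OF e2 \<open>1 \<le> i\<close>] by (auto simp: cat_def)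
      then show ?thesis unfolding part_def by blast
    qed
  qed
  show "part (cat m r1 r2) \<subseteq> concat m (part r1) (part r2)"
  proof
    fix B assume "B \<in> part (cat m r1 r2)"
    then obtain i where i: "cat m r1 r2 i i" "B = {j. cat m r1 r2 i j}" unfolding part_def by blast
    show "B \<in> concat m (part r1) (part r2)"
    proof (cases "i \<le> m")
      case True
      then have "B = {j. r1 i j}" "r1 i i" using i blockL[OF e1] by (auto simp: cat_def)
      then show ?thesis unfolding concat_def part_def by blast
    next
      case False
      define i' where "i' = i - m"
      have i': "i = i' + m" "1 \<le> i'" using False unfolding i'_def by auto
      then have "B = (\<lambda>x. x+m) ` {j. r2 i' j}" "r2 i' i'" using i blockR[OF e2 i'(2)] False by (auto simp: cat_def)
      then show ?thesis unfolding concat_def shift_def part_def by blast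
    qed
  qed
qed

lemma blk_part: assumes e: "eqv n c" and "c x x" shows "blk (part c) x = {j. c x j}"
  unfolding blk_def
proof (rule the_equality)
  show "{j. c x j} \<in> part c \<and> x \<in> {j. c x j}" using assms(2) unfolding part_def by auto
next
  fix B assume B: "B \<in> part c \<and> x \<in> B"
  then obtain i where "B = {j. c i j}" "c i x" unfolding part_def by auto
  then show "B = {j. c x j}" using block_eq[OF e] by blast
qed

definition merge :: "(nat \<Rightarrow> nat \<Rightarrow> bool) \<Rightarrow> nat \<Rightarrow> nat \<Rightarrow> nat \<Rightarrow> nat \<Rightarrow> bool" where
  "merge c x y i j \<longleftrightarrow> c i j \<or> (c i x \<and> c y j) \<or> (c i y \<and> c x j)"

lemma merge_part: assumes e: "eqv n c" and xx: "c x x" and yy: "c y y"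
  shows "(part c - {{j. c x j}, {j. c y j}}) \<union> {{j. c x j} \<union> {j. c y j}} = part (merge c x y)"
proof
  show "(part c - {{j. c x j}, {j. c y j}}) \<union> {{j. c x j} \<union> {j. c y j}} \<subseteq> part (merge c x y)"
  proof
    fix B assume B: "B \<in> (part c - {{j. c x j}, {j. c y j}}) \<union> {{j. c x j} \<union> {j. c y j}}"
    show "B \<in> part (merge c x y)"
    proof (cases "B = {j. c x j} \<union> {j. c y j}")
      case True
      have "B = {j. merge c x y x j}" using True xx by (auto simp: merge_def)
      moreover have "merge c x y x x" using xx by (simp add: merge_def)
      ultimately show ?thesis unfolding part_def by blast
    next
      case False
      then have B1: "B \<in> part c" "B \<noteq> {j. c x j}" "B \<noteq> {j. c y j}" using B by auto
      then obtain i where i: "c i i" "B = {j. c i j}" unfolding part_def by auto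
      have "\<not> c i x" using block_eq[OF e, of i x] i B1 by auto
      moreover have "\<not> c i y" using block_eq[OF e, of i y] i B1 by auto
      ultimately have "B = {j. merge c x y i j}" "merge c x y i i" using i by (auto simp: merge_def)
      then show ?thesis unfolding part_def by blast
    qed
  qed
  show "part (merge c x y) \<subseteq> (part c - {{j. c x j}, {j. c y j}}) \<union> {{j. c x j} \<union> {j. c y j}}"
  proof
    fix B assume "B \<in> part (merge c x y)"
    then obtain i where i: "merge c x y i i" "B = {j. merge c x y i j}" unfolding part_def by blast
    show "B \<in> (part c - {{j. c x j}, {j. c y j}}) \<union> {{j. c x j} \<union> {j. c y j}}"
    proof (cases "c i x")
      case True
      have h: "\<And>j. c i j = c x j" using block_eq[OF e True] by blast
      have "B = {j. c x j} \<union> {j. c y j}" using i(2) xx by (auto simp: merge_def h)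
      then show ?thesis by simp
    next
      case cx: False
      show ?thesis
      proof (cases "c i y")
        case True
        have h: "\<And>j. c i j = c y j" using block_eq[OF e True] by blast
        have "B = {j. c x j} \<union> {j. c y j}" using i(2) yy by (auto simp: merge_def h)
        then show ?thesis by simp
      next
        case False
        have ii: "c i i" and Bc: "B = {j. c i j}" using i cx False by (auto simp: merge_def)
        have "B \<in> part c" using ii Bc unfolding part_def by blast
        moreover have "B \<noteq> {j. c x j}" using Bc ii cx eqvD(6)[OF e, of x i] by auto
        moreover have "B \<noteq> {j. c y j}" using Bc ii False eqvD(6)[OF e, of y i] by auto
        ultimately show ?thesis by simp
      qed
    qed
  qed
qed

lemma bar_part: "bar = part (Uo emp 0)"
proof -
  have "part (Uo emp 0) = {{j. Uo emp 0 1 j}}" unfolding part_def by (auto simp: Uo_def emp_def)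
  also have "{j. Uo emp 0 1 j} = {1}" by (auto simp: Uo_def emp_def)
  finally show ?thesis by (simp add: bar_def)
qed

lemma ustar_part: assumes e: "eqv l r" shows "ustar 1 bar l (part r) = part (Uo r l)"
proof (cases "l = 0")
  case True
  then have rf: "\<And>i j. \<not> r i j" using eqvD(2)[OF e] eqvD(1)[OF e] by fastforce
  then have "part r = {}" unfolding part_def by auto
  moreover have "Uo r l = Uo emp 0" using rf True by (intro ext) (simp add: Uo_def emp_def)
  ultimately show ?thesis by (simp add: ustar_def bar_part)
next
  case False
  have r11: "r 1 1" using eqvD(5)[OF e, of 1] False by auto
  then have ne: "part r \<noteq> {}" unfolding part_def by auto
  have bne: "bar \<noteq> {}" by (simp add: bar_def)
  define c where "c = cat 1 (Uo emp 0) r"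
  have ec: "eqv (1 + l) c" unfolding c_def using eqv_cat[OF eqv_Uo[OF eqv_emp] e] by simp
  have S: "concat 1 bar (part r) = part c" unfolding c_def bar_part
    using concat_part[OF eqv_Uo[OF eqv_emp] e] by simp
  have c11: "c 1 1" by (simp add: c_def cat_def Uo_def)
  have cll: "c (1+l) (1+l)" using eqvD(5)[OF ec, of "1+l"] by simp
  have "ustar 1 bar l (part r) = (part c - {{j. c 1 j}, {j. c (1+l) j}}) \<union> {{j. c 1 j} \<union> {j. c (1+l) j}}"
    using ne bne unfolding ustar_def Let_def S blk_part[OF ec c11] blk_part[OF ec cll] by simp
  also have "\<dots> = part (merge c 1 (1+l))" using merge_part[OF ec c11 cll] .
  also have "merge c 1 (1+l) = Uo r l"
  proof (intro ext)
    fix i j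
    have r0: "\<And>x. \<not> r 0 x" "\<And>x. \<not> r x 0" using eqvD(1,3)[OF e] by fastforce+
    have ca: "c i j \<longleftrightarrow> (i = 1 \<and> j = 1) \<or> (2 \<le> i \<and> 2 \<le> j \<and> r (i-1) (j-1))" for i j
      unfolding c_def cat_def Uo_def emp_def using r0 by auto
    have c1: "c i 1 \<longleftrightarrow> i = 1" for i unfolding ca by auto
    have c1': "c 1 j \<longleftrightarrow> j = 1" for j unfolding ca by auto
    have cl: "c (1+l) j \<longleftrightarrow> 2 \<le> j \<and> r l (j-1)" for j unfolding ca using False by auto
    have cl': "c i (1+l) \<longleftrightarrow> 2 \<le> i \<and> r (i-1) l" for i unfolding ca using False by auto
    have sy: "r l (j-1) \<longleftrightarrow> r (j-1) l" using eqvD(6)[OF e, of l "j-1"] eqvD(6)[OF e, of "j-1" l] by blast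
    show "merge c 1 (1 + l) i j = Uo r l i j"
      unfolding merge_def c1 c1' cl cl' sy
      unfolding ca Uo_def by auto
  qed
  finally show ?thesis .
qed

lemma phi_part: "phi t = part (rphi t)"
proof (induction t)
  case Leaf then show ?case by (simp add: part_emp)
next
  case (Node s t)
  have es: "eqv (nodes s) (rphi s)" and et: "eqv (nodes t) (rphi t)" using eqv_rphi by auto
  have "phi (Node s t) = concat (nodes s) (part (rphi s)) (part (Uo (rphi t) (nodes t)))"
    using Node ustar_part[OF et] by simp
  also have "\<dots> = part (rphi (Node s t))" using concat_part[OF es eqv_Uo[OF et]] by simp
  finally show ?case .
qed



lemma Il_m1': "1 \<le> x \<Longrightarrow> 1 \<le> y \<Longrightarrow> Il r1 r2 (2*x - 1) (2*y - 1) = r1 x y"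
  using Il_m1 by simp

lemma kreweras_rP: "kreweras (nodes t) (part (rP t)) = part (rQ t)"
proof -
  define n where "n = nodes t"
  have eP: "eqv n (rP t)" and nP: "ncr (rP t)" and eQ: "eqv n (rQ t)" and nQ: "ncr (rQ t)"
    using eqv_rPQ n_def by auto
  have a: "part (rQ t) \<in> NCP n" using part_NCP[OF eQ nQ] .
  have b: "noncrossing (interleave (part (rP t)) (part (rQ t)))"
  proof -
    have "ncr (Il (rP t) (rQ t))" using eqv_rphi[of "R t"] rphi_R by simp
    then show ?thesis using interleave_part[OF eP eQ] noncrossing_part[OF eqv_Il[OF eP eQ]] by simp
  qed
  have c: "refines Q' (part (rQ t))" if Q': "Q' \<in> NCP n" "noncrossing (interleave (part (rP t)) Q')" for Q'
  proof -
    define q where "q = sb Q'"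
    have eq: "eqv n q" and Qq: "Q' = part q" using NCP_sb[OF Q'(1)] q_def by auto
    have "noncrossing (part (Il (rP t) q))" using Q'(2) Qq interleave_part[OF eP eq] by simp
    then have nc: "ncr (Il (rP t) q)" using noncrossing_part[OF eqv_Il[OF eP eq]] by simp
    have main: "rQ t i j" if ij: "q i j" "i \<le> j" for i j
    proof -
      have i1: "1 \<le> i" and jn: "j \<le> n" using eqvD(1,4)[OF eq ij(1)] by auto
      have "closed (rP t) (Suc i) j"
      proof (rule closedI)
        fix x y assume xy: "rP t x y" "Suc i \<le> x" "x \<le> j"
        have y1: "1 \<le> y" using eqvD(3)[OF eP xy(1)] .
        show "Suc i \<le> y \<and> y \<le> j"
        proof (rule ccontr)
          assume "\<not> ?thesis"
          then consider "y \<le> i" | "j < y" by linarith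
          then show False
          proof cases
            case 1
            have "Il (rP t) q (2*y - 1) (2*x - 1)" using Il_m1'[of y x] y1 xy eqvD(6)[OF eP xy(1)] by simp
            moreover have "Il (rP t) q (2*i) (2*j)" using ij by (simp add: Il_ee)
            moreover have "2*y - 1 < 2*i" "2*i < 2*x - 1" "2*x - 1 < 2*j" using 1 xy y1 by auto
            ultimately have "Il (rP t) q (2*y - 1) (2*i)" using nc unfolding ncr_def by blast
            then show False using Il_m1e y1 by simp
          next
            case 2
            have "Il (rP t) q (2*x - 1) (2*y - 1)" using Il_m1'[of x y] y1 xy by simp
            moreover have "Il (rP t) q (2*i) (2*j)" using ij by (simp add: Il_ee)
            moreover have "2*i < 2*x - 1" "2*x - 1 < 2*j" "2*j < 2*y - 1" using 2 xy y1 by auto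
            ultimately have "Il (rP t) q (2*i) (2*x - 1)" using nc unfolding ncr_def by blast
            then show False using Il_em1 xy by simp
          qed
        qed
      qed
      then show ?thesis using M[of t] i1 jn ij n_def by blast
    qed
    have "\<forall>i j. q i j \<longrightarrow> rQ t i j"
    proof (intro allI impI)
      fix i j assume "q i j"
      show "rQ t i j"
      proof (cases "i \<le> j")
        case True then show ?thesis using main \<open>q i j\<close> by blast
      next
        case False
        then have "rQ t j i" using main eqvD(6)[OF eq \<open>q i j\<close>] by simp
        then show ?thesis using eqvD(6)[OF eQ] by blast
      qed
    qed
    then show ?thesis using refines_part[OF eq eQ] Qq by simp
  qed
  have "(THE Q. Q \<in> NCP n \<and> noncrossing (interleave (part (rP t)) Q) \<and>
      (\<forall>Q'\<in>NCP n. noncrossing (interleave (part (rP t)) Q') \<longrightarrow> refines Q' Q)) = part (rQ t)"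
  proof (rule the_equality)
    show "part (rQ t) \<in> NCP n \<and> noncrossing (interleave (part (rP t)) (part (rQ t))) \<and>
      (\<forall>Q'\<in>NCP n. noncrossing (interleave (part (rP t)) Q') \<longrightarrow> refines Q' (part (rQ t)))"
      using a b c by blast
  next
    fix Q assume Q: "Q \<in> NCP n \<and> noncrossing (interleave (part (rP t)) Q) \<and>
      (\<forall>Q'\<in>NCP n. noncrossing (interleave (part (rP t)) Q') \<longrightarrow> refines Q' Q)"
    have r1: "refines (part (rQ t)) Q" using Q a b by blast
    have r2: "refines Q (part (rQ t))" using Q c by blast
    have eq: "eqv n (sb Q)" and Qq: "Q = part (sb Q)" using NCP_sb Q by blast+
    have "\<forall>i j. rQ t i j \<longrightarrow> sb Q i j" using r1 Qq refines_part[OF eQ eq] by simp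
    moreover have "\<forall>i j. sb Q i j \<longrightarrow> rQ t i j" using r2 Qq refines_part[OF eq eQ] by simp
    ultimately have "sb Q = rQ t" by (intro ext) blast
    then show "Q = part (rQ t)" using Qq by simp
  qed
  then show ?thesis unfolding kreweras_def n_def .
qed



definition sub :: "nat \<Rightarrow> nat \<Rightarrow> (nat \<Rightarrow> nat \<Rightarrow> bool) \<Rightarrow> nat \<Rightarrow> nat \<Rightarrow> bool" where
  "sub k N r x y \<longleftrightarrow> 1 \<le> x \<and> x \<le> N \<and> 1 \<le> y \<and> y \<le> N \<and> r (x+k) (y+k)"

lemma eqv_sub: assumes e: "eqv n r" "k + N \<le> n" shows "eqv N (sub k N r)"
proof (rule eqvI)
  fix i j assume "sub k N r i j" then show "1 \<le> i \<and> i \<le> N \<and> 1 \<le> j \<and> j \<le> N" unfolding sub_def by auto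
next
  fix i assume "1 \<le> i" "i \<le> N" then show "sub k N r i i" unfolding sub_def using eqvD(5)[OF e(1), of "i+k"] e(2) by auto
next
  fix i j assume "sub k N r i j" then show "sub k N r j i" unfolding sub_def using eqvD(6)[OF e(1)] by blast
next
  fix i j l assume "sub k N r i j" "sub k N r j l" then show "sub k N r i l" unfolding sub_def using eqvD(7)[OF e(1)] by blast
qed

lemma ncr_sub: assumes "ncr r" shows "ncr (sub k N r)"
  unfolding ncr_def
proof (intro allI impI)
  fix a b c d assume h: "a < b" "b < c" "c < d" "sub k N r a c" "sub k N r b d"
  then have "r (a+k) (b+k)" using assms unfolding ncr_def sub_def by (meson add_less_mono1)
  then show "sub k N r a b" using h unfolding sub_def by auto
qed

lemma eqv0: assumes "eqv 0 r" shows "r = emp"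
proof (intro ext)
  fix i j show "r i j = emp i j" using eqvD(1,2)[OF assms, of i j] by (auto simp: emp_def)
qed

lemma eqv_left: "eqv n r \<Longrightarrow> r x y \<Longrightarrow> r z x \<longleftrightarrow> r z y"
  by (metis eqvD(6,7))
lemma eqv_right: "eqv n r \<Longrightarrow> r x y \<Longrightarrow> r x z \<longleftrightarrow> r y z"
  by (metis eqvD(6,7))
lemma eqv_symeq: "eqv n r \<Longrightarrow> r x y \<longleftrightarrow> r y x"
  by (metis eqvD(6))

lemma surj_PQ: "eqv n r \<Longrightarrow> ncr r \<Longrightarrow> (\<exists>t. nodes t = n \<and> rP t = r) \<and> (\<exists>t. nodes t = n \<and> rQ t = r)"
proof (induction n arbitrary: r rule: less_induct)
  case (less n)
  note e = less.prems(1) and nc = less.prems(2)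
  note sy = eqvD(6)[OF e] and tr = eqvD(7)[OF e]
  have ncr: "r p q" if "p < q" "q < v" "v < w" "r p v" "r q w" for p q v w using nc that unfolding ncr_def by blast
  show ?case
  proof (cases "n = 0")
    case True
    then have "r = emp" using eqv0 e by simp
    then show ?thesis using True by (metis nodes.simps(1) rP.simps(1) rQ.simps(1))
  next
    case False
    have P: "\<exists>t. nodes t = n \<and> rP t = r"
    proof -
      define S where "S = {j. r 1 j}"
      have "S \<subseteq> {..n}" unfolding S_def using eqvD(4)[OF e] by auto
      then have fin: "finite S" using finite_subset by blast
      have r11: "r 1 1" using eqvD(5)[OF e, of 1] False by auto
      define m where "m = Max S"
      have m: "r 1 m" using Max_in[OF fin] r11 unfolding m_def S_def by auto
      have mmax: "\<And>j. r 1 j \<Longrightarrow> j \<le> m" using Max_ge[OF fin] unfolding m_def S_def by auto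
      have m1: "1 \<le> m" and mn: "m \<le> n" using eqvD(3,4)[OF e m] by auto
      have bnd: "j \<le> m" if "r i j" "i \<le> m" for i j
      proof (rule ccontr)
        assume jm: "\<not> j \<le> m"
        have i1: "1 \<le> i" using eqvD(1)[OF e that(1)] .
        show False
        proof (cases "i = 1 \<or> i = m")
          case True
          then have "r 1 j" using that(1) tr[OF m] by auto
          then show False using mmax jm by auto
        next
          case False
          then have "1 < i" "i < m" using i1 that by auto
          then have "r 1 i" using ncr[of 1 i m j] m that jm by auto
          then have "r 1 j" using tr that by blast
          then show False using mmax jm by auto
        qed
      qed
      define a where "a = m - 1"
      have ma: "m = Suc a" using m1 a_def by auto
      define r1 where "r1 = sub 1 a r"
      define r2 where "r2 = sub m (n - m) r"
      have e1: "eqv a r1" unfolding r1_def using eqv_sub[OF e] ma mn by auto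
      have e2: "eqv (n - m) r2" unfolding r2_def using eqv_sub[OF e] mn by auto
      obtain t1 where t1: "nodes t1 = a" "rQ t1 = r1"
        using less.IH[of a r1] e1 ncr_sub[OF nc] r1_def ma mn by auto
      obtain t2 where t2: "nodes t2 = n - m" "rP t2 = r2"
        using less.IH[of "n - m" r2] e2 ncr_sub[OF nc] r2_def m1 mn by auto
      have "rP (Node t1 t2) = r"
      proof (intro ext)
        fix i j
        have "rP (Node t1 t2) i j = cat m (Uo r1 a) r2 i j" using t1 t2 ma by (simp add: rP_Node)
        also have "\<dots> = r i j"
        proof (cases "i \<le> m \<and> j \<le> m")
          case True
          have "Uo r1 a i j = r i j"
          proof (cases "i = 0 \<or> j = 0")
            case True
            then show ?thesis using eqvD(1,3)[OF e, of i j] by (auto simp: Uo_def)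
          next
            case False
            consider "i = 1" "j = 1" | "i = 1" "2 \<le> j" | "2 \<le> i" "j = 1" | "2 \<le> i" "2 \<le> j" using False by linarith
            then show ?thesis
            proof cases
              case 1 then show ?thesis using r11 by (simp add: Uo_def)
            next
              case 2
              have "r1 (j-1) a = r j m" unfolding r1_def sub_def using 2 True ma by auto
              also have "\<dots> = r j 1" using eqv_left[OF e m] by simp
              also have "\<dots> = r 1 j" using eqv_symeq[OF e] by simp
              finally show ?thesis using 2 by (simp add: Uo_def)
            next
              case 3
              have "r1 (i-1) a = r i m" unfolding r1_def sub_def using 3 True ma by auto
              also have "\<dots> = r i 1" using eqv_left[OF e m] by simp
              finally show ?thesis using 3 by (simp add: Uo_def)
            next
              case 4
              have "r1 (i-1) (j-1) = r i j" unfolding r1_def sub_def using 4 True ma by auto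
              then show ?thesis using 4 by (simp add: Uo_def)
            qed
          qed
          then show ?thesis using True by (simp add: cat_LL)
        next
          case False
          show ?thesis
          proof (cases "m < i \<and> m < j")
            case True
            have "r2 (i - m) (j - m) = r i j" unfolding r2_def sub_def using True eqvD(2,4)[OF e, of i j] by auto
            then show ?thesis using True by (simp add: cat_RR)
          next
            case False
            have "\<not> r i j"
            proof
              assume rij: "r i j"
              show False
              proof (cases "i \<le> m")
                case True then show False using bnd[OF rij] False \<open>\<not> (i \<le> m \<and> j \<le> m)\<close> by auto
              next
                case f2: False then show False using bnd[OF sy[OF rij]] False \<open>\<not> (i \<le> m \<and> j \<le> m)\<close> by auto
              qed
            qed
            moreover have "\<not> cat m (Uo r1 a) r2 i j" using False \<open>\<not> (i \<le> m \<and> j \<le> m)\<close> unfolding cat_def by auto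
            ultimately show ?thesis by simp
          qed
        qed
        finally show "rP (Node t1 t2) i j = r i j" .
      qed
      moreover have "nodes (Node t1 t2) = n" using t1 t2 ma mn by simp
      ultimately show ?thesis by blast
    qed
    have Q: "\<exists>t. nodes t = n \<and> rQ t = r"
    proof -
      define S where "S = {j. r j n}"
      have rnn: "r n n" using eqvD(5)[OF e, of n] False by auto
      have ne: "S \<noteq> {}" using rnn unfolding S_def by auto
      have "S \<subseteq> {..n}" unfolding S_def using eqvD(2)[OF e] by auto
      then have fin: "finite S" using finite_subset by blast
      define m where "m = Min S"
      have m: "r m n" using Min_in[OF fin ne] unfolding m_def S_def by auto
      have mmin: "\<And>j. r j n \<Longrightarrow> m \<le> j" using Min_le[OF fin] unfolding m_def S_def by auto
      have m1: "1 \<le> m" and mn: "m \<le> n" using eqvD(1,2)[OF e m] by auto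
      have bnd: "j < m" if "r i j" "i < m" for i j
      proof (rule ccontr)
        assume jm: "\<not> j < m"
        have jn: "j \<le> n" using eqvD(4)[OF e that(1)] .
        show False
        proof (cases "j = m \<or> j = n")
          case True
          then have "r i n" using that(1) tr[OF _ m] by auto
          then show False using mmin that by fastforce
        next
          case False
          then have "m < j" "j < n" using jn jm by auto
          then have "r i m" using ncr[of i m j n] m that by auto
          then have "r i n" using tr[OF _ m] by blast
          then show False using mmin that by fastforce
        qed
      qed
      define a where "a = m - 1"
      have ma: "m = Suc a" using m1 a_def by auto
      define b where "b = n - m"
      define r1 where "r1 = sub 0 a r"
      define r2 where "r2 = sub m b r"
      have e1: "eqv a r1" unfolding r1_def using eqv_sub[OF e] ma mn by auto
      have e2: "eqv b r2" unfolding r2_def b_def using eqv_sub[OF e] mn by auto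
      obtain t1 where t1: "nodes t1 = a" "rP t1 = r1"
        using less.IH[of a r1] e1 ncr_sub[OF nc] r1_def ma mn by auto
      obtain t2 where t2: "nodes t2 = b" "rQ t2 = r2"
        using less.IH[of b r2] e2 ncr_sub[OF nc] r2_def m1 mn b_def by auto
      have "rQ (Node t1 t2) = r"
      proof (intro ext)
        fix i j
        have "rQ (Node t1 t2) i j = cat a r1 (Uo r2 b) i j" using t1 t2 by (simp add: rQ_Node)
        also have "\<dots> = r i j"
        proof (cases "i \<le> a \<and> j \<le> a")
          case True
          have "r1 i j = r i j" unfolding r1_def sub_def using True eqvD(1,3)[OF e, of i j] by auto
          then show ?thesis using True by (simp add: cat_LL)
        next
          case nLL: False
          show ?thesis
          proof (cases "a < i \<and> a < j")
            case True
            have "Uo r2 b (i - a) (j - a) = r i j"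
            proof -
              consider "i = m" "j = m" | "i = m" "m < j" | "m < i" "j = m" | "m < i" "m < j" using True ma by linarith
              then show ?thesis
              proof cases
                case 1 then show ?thesis using eqvD(5)[OF e, of m] m1 mn ma by (simp add: Uo_def)
              next
                case 2
                have "r2 (j - a - 1) b = r j n" unfolding r2_def sub_def b_def using 2 ma eqvD(2)[OF e, of j n] mn
                  by (auto simp: le_diff_conv2)
                also have "\<dots> = r j m" using eqv_left[OF e m] by simp
                also have "\<dots> = r m j" using eqv_symeq[OF e] by simp
                finally show ?thesis using 2 ma by (auto simp: Uo_def)
              next
                case 3
                have "r2 (i - a - 1) b = r i n" unfolding r2_def sub_def b_def using 3 ma eqvD(2)[OF e, of i n] mn
                  by (auto simp: le_diff_conv2)
                also have "\<dots> = r i m" using eqv_left[OF e m] by simp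
                finally show ?thesis using 3 ma by (auto simp: Uo_def)
              next
                case 4
                have "r2 (i - a - 1) (j - a - 1) = r i j" unfolding r2_def sub_def b_def
                  using 4 ma eqvD(2,4)[OF e, of i j] by (auto simp: le_diff_conv2)
                then show ?thesis using 4 ma by (auto simp: Uo_def)
              qed
            qed
            then show ?thesis using True by (simp add: cat_RR)
          next
            case False
            have "\<not> r i j"
            proof
              assume rij: "r i j"
              show False
              proof (cases "i \<le> a")
                case True then show False using bnd[OF rij] False nLL ma by auto
              next
                case f2: False then show False using bnd[OF sy[OF rij]] False nLL ma by auto
              qed
            qed
            moreover have "\<not> cat a r1 (Uo r2 b) i j" using False nLL unfolding cat_def by auto
            ultimately show ?thesis by simp
          qed
        qed
        finally show "rQ (Node t1 t2) i j = r i j" .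
      qed
      moreover have "nodes (Node t1 t2) = n" using t1 t2 ma mn b_def by simp
      ultimately show ?thesis by blast
    qed
    show ?thesis using P Q by blast
  qed
qed



lemma phiR_eq: "phi (R t) = interleave (part (rP t)) (kreweras (nodes t) (part (rP t)))"
proof -
  have eP: "eqv (nodes t) (rP t)" and eQ: "eqv (nodes t) (rQ t)" using eqv_rPQ by auto
  have "phi (R t) = part (rphi (R t))" by (rule phi_part)
  also have "\<dots> = part (Il (rP t) (rQ t))" by (simp add: rphi_R)
  also have "\<dots> = interleave (part (rP t)) (part (rQ t))" using interleave_part[OF eP eQ] by simp
  also have "\<dots> = interleave (part (rP t)) (kreweras (nodes t) (part (rP t)))" by (simp add: kreweras_rP)
  finally show ?thesis .
qed

theorem proposition3:
  fixes n :: nat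
  shows "(\<lambda>t. phi (R t)) ` Y n = (\<lambda>P. interleave P (kreweras n P)) ` NCP n"
proof
  show "(\<lambda>t. phi (R t)) ` Y n \<subseteq> (\<lambda>P. interleave P (kreweras n P)) ` NCP n"
  proof
    fix X assume "X \<in> (\<lambda>t. phi (R t)) ` Y n"
    then obtain t where t: "nodes t = n" "X = phi (R t)" unfolding Y_def by auto
    have "part (rP t) \<in> NCP n" using part_NCP eqv_rPQ t(1) by blast
    moreover have "X = interleave (part (rP t)) (kreweras n (part (rP t)))" using t phiR_eq by simp
    ultimately show "X \<in> (\<lambda>P. interleave P (kreweras n P)) ` NCP n" by blast
  qed
  show "(\<lambda>P. interleave P (kreweras n P)) ` NCP n \<subseteq> (\<lambda>t. phi (R t)) ` Y n"
  proof
    fix X assume "X \<in> (\<lambda>P. interleave P (kreweras n P)) ` NCP n"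
    then obtain P where P: "P \<in> NCP n" "X = interleave P (kreweras n P)" by auto
    obtain t where t: "nodes t = n" "rP t = sb P" using surj_PQ NCP_sb[OF P(1)] by blast
    have "P = part (rP t)" using NCP_sb[OF P(1)] t by simp
    then have "X = phi (R t)" using P(2) phiR_eq[of t] t(1) by simp
    moreover have "t \<in> Y n" using t(1) unfolding Y_def by simp
    ultimately show "X \<in> (\<lambda>t. phi (R t)) ` Y n" by blast
  qed
qed


end
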